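(* Let $\sigma$ be an erasing $k$-block substitution with $w_\epsilon\neq 1^k$ that satisfies the optimality condition. Then $f_\sigma:\mathbb I\to\mathbb I$ is surjective.
   Context: Notation: $\mathbb I=[0,1]$. $\{0,1\}^*$ and $\{0,1\}^\omega$ denote finite and infinite binary words, and $\epsilon$ is the empty word. For a finite or infinite word $w$, set $0.w=\sum_{i=1}^{|w|}w_i2^{-i}$. For $x\in(0,1]$, $\widetilde x\in\{0,1\}^\omega$ denotes the unique infinite binary expansion of $x$ that does not end in $0^\infty$. Fix $k\ge 2$. An erasing $k$-block substitution is a map $\sigma:\{0,1\}^k\to\{0,1\}^*$ with exactly one block $w_\epsilon$ satisfying $\sigma(w_\epsilon)=\epsilon$; all other blocks have nonempty images. The map $\sigma$ acts on infinite words (and on finite words of length a multiple of $k$) by cutting them into consecutive $k$-blocks and concatenating the images of the blocks. The induced interval map $f_\sigma:\mathbb I\to\mathbb I$ is defined by $f_\sigma(x)=0.\sigma(\widetilde x)$ if $x\in(0,1]$ and $\widetilde x\ne w_\epsilon^\infty$, and $f_\sigma(x)=0$ if $x=0$ or $\widetilde x=w_\epsilon^\infty$. Here $\sigma(\widetilde x)$ may be a finite word. Optimality condition (OC): every $w\in\{0,1\}^\omega$ can be written as an infinite concatenation $w=\prod_{i=1}^\infty\sigma(b_i)$ with blocks $b_i\in\{0,1\}^k$ satisfying $\sigma(b_i)\ne\epsilon$. *)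

theory Defs
  imports Complex_Main
begin

text \<open>Binary digits are booleans (True = 1). Finite words are bool lists,
infinite words are functions nat => bool (position 0 is the first digit).\<close>

definition bit_val :: "bool \<Rightarrow> real" where
  "bit_val b = (if b then 1 else 0)"

definition fin_val :: "bool list \<Rightarrow> real" where
  "fin_val xs = (\<Sum>i<length xs. bit_val (xs ! i) / 2 ^ (i + 1))"

definition inf_val :: "(nat \<Rightarrow> bool) \<Rightarrow> real" where
  "inf_val w = (\<Sum>n. bit_val (w n) / 2 ^ (n + 1))"

definition bin_exp :: "real \<Rightarrow> (nat \<Rightarrow> bool)" where
  "bin_exp x = (THE w. (\<forall>N. \<exists>n\<ge>N. w n) \<and> inf_val w = x)"

definition kblock :: "nat \<Rightarrow> (nat \<Rightarrow> bool) \<Rightarrow> nat \<Rightarrow> bool list" where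
  "kblock k w i = map w [i * k..<(i + 1) * k]"

definition erasing_subst :: "nat \<Rightarrow> (bool list \<Rightarrow> bool list) \<Rightarrow> bool list \<Rightarrow> bool" where
  "erasing_subst k \<sigma> weps \<longleftrightarrow> length weps = k \<and> \<sigma> weps = [] \<and>
     (\<forall>b. length b = k \<and> b \<noteq> weps \<longrightarrow> \<sigma> b \<noteq> [])"

definition img_prefix :: "(bool list \<Rightarrow> bool list) \<Rightarrow> (nat \<Rightarrow> bool list) \<Rightarrow> nat \<Rightarrow> bool list" where
  "img_prefix \<sigma> b n = concat (map (\<lambda>i. \<sigma> (b i)) [0..<n])"

text \<open>0.sigma(w) for an infinite word w (sigma(w) possibly finite): limit of the
  values of the finite prefixes sigma(b_0)...sigma(b_{n-1})\<close>
definition subst_val :: "nat \<Rightarrow> (bool list \<Rightarrow> bool list) \<Rightarrow> (nat \<Rightarrow> bool) \<Rightarrow> real" where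
  "subst_val k \<sigma> w = lim (\<lambda>n. fin_val (img_prefix \<sigma> (kblock k w) n))"

definition f_sigma :: "nat \<Rightarrow> (bool list \<Rightarrow> bool list) \<Rightarrow> bool list \<Rightarrow> real \<Rightarrow> real" where
  "f_sigma k \<sigma> weps x =
     (if 0 < x \<and> x \<le> 1 \<and> \<not> (\<forall>i. kblock k (bin_exp x) i = weps)
      then subst_val k \<sigma> (bin_exp x) else 0)"

definition optimality_cond :: "nat \<Rightarrow> (bool list \<Rightarrow> bool list) \<Rightarrow> bool" where
  "optimality_cond k \<sigma> \<longleftrightarrow>
     (\<forall>w :: nat \<Rightarrow> bool. \<exists>b :: nat \<Rightarrow> bool list.
        (\<forall>i. length (b i) = k \<and> \<sigma> (b i) \<noteq> []) \<and>
        (\<forall>n. img_prefix \<sigma> b n = map w [0..<length (img_prefix \<sigma> b n)]))"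

end

theory Submission
  imports Defs
begin

lemma bit_val_bounds[simp]: "0 \<le> bit_val b" "bit_val b \<le> 1"
  by (auto simp: bit_val_def)

lemma fin_val_Nil[simp]: "fin_val [] = 0" by (simp add: fin_val_def)

lemma fin_val_Cons[simp]: "fin_val (x#xs) = (bit_val x + fin_val xs) / 2"
proof -
  have "fin_val (x#xs) = (\<Sum>i<Suc (length xs). bit_val ((x#xs) ! i) / 2 ^ (i + 1))"
    by (simp add: fin_val_def)
  also have "\<dots> = bit_val x / 2 + (\<Sum>i<length xs. bit_val (xs ! i) / 2 ^ (i + 2))"
    by (subst sum.lessThan_Suc_shift) simp
  also have "(\<Sum>i<length xs. bit_val (xs ! i) / 2 ^ (i + 2)) = fin_val xs / 2"
    by (simp add: fin_val_def sum_divide_distrib)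
  finally show ?thesis by simp
qed

lemma fin_val_append: "fin_val (xs @ ys) = fin_val xs + fin_val ys / 2 ^ length xs"
  by (induction xs) (auto simp: field_simps)

lemma fin_val_bounds: "0 \<le> fin_val xs" "fin_val xs \<le> 1"
proof (induction xs)
  case (Cons a xs)
  { case 1 show ?case using Cons.IH by simp }
  { case 2 show ?case using Cons.IH bit_val_bounds(2)[of a] by (simp del: bit_val_bounds) }
qed auto

lemma fin_val_mono: "fin_val xs \<le> fin_val (xs @ ys)"
  using fin_val_bounds[of ys] by (simp add: fin_val_append)

lemma img_prefix_Suc: "img_prefix \<sigma> b (Suc n) = img_prefix \<sigma> b n @ \<sigma> (b n)"
  by (simp add: img_prefix_def)

lemma img_prefix_conv:
  "\<exists>L. (\<lambda>n. fin_val (img_prefix \<sigma> d n)) \<longlonglongrightarrow> L \<and> 0 \<le> L \<and> L \<le> 1"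
proof -
  have inc: "incseq (\<lambda>n. fin_val (img_prefix \<sigma> d n))"
    by (rule incseq_SucI) (simp add: img_prefix_Suc fin_val_mono)
  obtain L where L: "(\<lambda>n. fin_val (img_prefix \<sigma> d n)) \<longlonglongrightarrow> L"
      "\<forall>i. fin_val (img_prefix \<sigma> d i) \<le> L"
    using incseq_convergent[OF inc, of 1] fin_val_bounds by blast
  have "L \<le> 1" using L(1) by (rule LIMSEQ_le_const2) (auto simp: fin_val_bounds)
  moreover have "0 \<le> L" using L(2) fin_val_bounds(1) order_trans by blast
  ultimately show ?thesis using L by blast
qed

lemma f_sigma_range: "0 \<le> f_sigma k \<sigma> weps x \<and> f_sigma k \<sigma> weps x \<le> 1"
proof -
  obtain L where "(\<lambda>n. fin_val (img_prefix \<sigma> (kblock k (bin_exp x)) n)) \<longlonglongrightarrow> L" "0 \<le> L" "L \<le> 1"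
    using img_prefix_conv by blast
  then show ?thesis by (auto simp: f_sigma_def subst_val_def limI)
qed

lemma summable_bits: "summable (\<lambda>n. bit_val (w n) / 2 ^ (n + 1))"
proof (rule summable_comparison_test')
  show "summable (\<lambda>n. (1/2::real) ^ Suc n)" using power_half_series sums_summable by blast
  show "norm (bit_val (w n) / 2 ^ (n + 1)) \<le> (1/2) ^ Suc n" for n
    by (simp add: power_divide divide_right_mono)
qed

lemma inf_val_le1: "inf_val w \<le> 1"
proof -
  have "inf_val w \<le> (\<Sum>n. (1/2::real) ^ Suc n)" unfolding inf_val_def
    using summable_bits sums_summable[OF power_half_series]
    by (intro suminf_le) (simp_all add: power_divide divide_right_mono)
  then show ?thesis using sums_unique[OF power_half_series] by simp
qed

lemma inf_val_less:
  assumes eq: "\<forall>i<n. v i = w i" and vn: "v n" and wn: "\<not> w n" and inf: "\<forall>N. \<exists>m\<ge>N. v m"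
  shows "inf_val w < inf_val v"
proof -
  define fv where "fv i = bit_val (v i) / 2 ^ (i + 1)" for i
  define fw where "fw i = bit_val (w i) / 2 ^ (i + 1)" for i
  have sv: "summable fv" and sw: "summable fw" unfolding fv_def fw_def by (rule summable_bits)+
  have v1: "inf_val v = (\<Sum>i. fv (i + Suc n)) + (\<Sum>i<Suc n. fv i)"
    unfolding inf_val_def fv_def[symmetric] by (rule suminf_split_initial_segment[OF sv])
  have w1: "inf_val w = (\<Sum>i. fw (i + Suc n)) + (\<Sum>i<Suc n. fw i)"
    unfolding inf_val_def fw_def[symmetric] by (rule suminf_split_initial_segment[OF sw])
  have pre: "(\<Sum>i<n. fv i) = (\<Sum>i<n. fw i)" using eq by (auto simp: fv_def fw_def)
  have p1: "(\<Sum>i<Suc n. fv i) = (\<Sum>i<n. fw i) + 1 / 2 ^ (n+1)"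
    using pre vn by (simp add: fv_def bit_val_def)
  have p2: "(\<Sum>i<Suc n. fw i) = (\<Sum>i<n. fw i)"
    using wn by (simp add: fw_def bit_val_def)
  obtain m where m: "m \<ge> Suc n" "v m" using inf by blast
  have t1: "0 < (\<Sum>i. fv (i + Suc n))"
  proof (rule suminf_pos2)
    show "summable (\<lambda>i. fv (i + Suc n))" using sv by (rule summable_ignore_initial_segment)
    show "0 \<le> fv (i + Suc n)" for i by (simp add: fv_def)
    show "0 < fv (m - Suc n + Suc n)" using m by (simp add: fv_def bit_val_def)
  qed
  have gs: "summable (\<lambda>i. (1/2::real) ^ Suc i)" using power_half_series sums_summable by blast
  have "(\<Sum>i. fw (i + Suc n)) \<le> (\<Sum>i. (1/2::real) ^ Suc i * (1 / 2 ^ Suc n))"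
  proof (rule suminf_le)
    show "summable (\<lambda>i. fw (i + Suc n))" using sw by (rule summable_ignore_initial_segment)
    show "summable (\<lambda>i. (1/2::real) ^ Suc i * (1 / 2 ^ Suc n))"
      using gs by (rule summable_mult2)
    show "fw (i + Suc n) \<le> (1/2::real) ^ Suc i * (1 / 2 ^ Suc n)" for i
      by (simp add: fw_def power_add power_divide divide_right_mono)
  qed
  also have "\<dots> = 1 / 2 ^ Suc n"
    unfolding suminf_mult2[OF gs, symmetric] sums_unique[OF power_half_series, symmetric] by simp
  finally show ?thesis using v1 w1 p1 p2 t1 by simp
qed

lemma inf_val_unique:
  assumes "\<forall>N. \<exists>m\<ge>N. v m" "\<forall>N. \<exists>m\<ge>N. w m" "inf_val v = inf_val w"
  shows "v = w"
proof (rule ccontr)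
  assume "v \<noteq> w"
  then have "\<exists>i. v i \<noteq> w i" by blast
  define n where "n = (LEAST i. v i \<noteq> w i)"
  have n: "v n \<noteq> w n" unfolding n_def by (rule LeastI_ex) fact
  have lt: "\<forall>i<n. v i = w i" unfolding n_def using not_less_Least by blast
  show False
  proof (cases "v n")
    case True
    then show ?thesis using inf_val_less[of n v w] lt n assms by auto
  next
    case False
    then show ?thesis using inf_val_less[of n w v] lt n assms by auto
  qed
qed

lemma bin_exp_eq:
  assumes "\<forall>N. \<exists>m\<ge>N. u m"
  shows "bin_exp (inf_val u) = u"
  unfolding bin_exp_def
  by (rule the_equality) (use assms inf_val_unique in auto)

lemma bin_exists:
  fixes y :: real
  assumes y: "0 < y" "y \<le> 1"
  shows "\<exists>w. (\<forall>N. \<exists>m\<ge>N. w m) \<and> inf_val w = y"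
proof -
  define a :: "nat \<Rightarrow> int" where "a n = \<lceil>2 ^ n * y\<rceil> - 1" for n
  have alt: "real_of_int (a n) < 2 ^ n * y" and age: "2 ^ n * y \<le> real_of_int (a n) + 1" for n
    using ceiling_correct[of "2 ^ n * y"] by (auto simp: a_def)
  have step: "a (Suc n) = 2 * a n \<or> a (Suc n) = 2 * a n + 1" for n
  proof -
    have "real_of_int (2 * a n) < real_of_int (a (Suc n) + 1)"
      using alt[of n] age[of "Suc n"] by simp
    then have 1: "2 * a n \<le> a (Suc n)" by linarith
    have "real_of_int (a (Suc n)) < real_of_int (2 * a n + 2)"
      using alt[of "Suc n"] age[of n] by simp
    then have 2: "a (Suc n) < 2 * a n + 2" by linarith
    from 1 2 show ?thesis by linarith
  qed
  define w where "w n = (a (Suc n) = 2 * a n + 1)" for n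
  have bw: "bit_val (w n) = real_of_int (a (Suc n)) - 2 * real_of_int (a n)" for n
    using step[of n] by (auto simp: w_def bit_val_def)
  have a0: "a 0 = 0" using y by (simp add: a_def ceiling_unique)
  have ps: "(\<Sum>i<n. bit_val (w i) / 2 ^ (i + 1)) = real_of_int (a n) / 2 ^ n" for n
  proof (induction n)
    case 0 then show ?case by (simp add: a0)
  next
    case (Suc n)
    then show ?case by (simp add: bw field_simps)
  qed
  have lim: "(\<lambda>n. real_of_int (a n) / 2 ^ n) \<longlonglongrightarrow> y"
  proof (rule tendsto_sandwich)
    show "\<forall>\<^sub>F n in sequentially. y - 1 / 2 ^ n \<le> real_of_int (a n) / 2 ^ n"
    proof (intro always_eventually allI)
      fix n
      have "y - 1 / 2 ^ n = (2 ^ n * y - 1) / 2 ^ n" by (simp add: field_simps)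
      also have "\<dots> \<le> real_of_int (a n) / 2 ^ n"
        using age[of n] by (intro divide_right_mono) auto
      finally show "y - 1 / 2 ^ n \<le> real_of_int (a n) / 2 ^ n" .
    qed
    show "\<forall>\<^sub>F n in sequentially. real_of_int (a n) / 2 ^ n \<le> y"
      using alt by (auto simp: field_simps less_imp_le)
    show "(\<lambda>n. y - 1 / 2 ^ n) \<longlonglongrightarrow> y"
      using tendsto_diff[OF tendsto_const LIMSEQ_divide_realpow_zero[of 2 1]] by simp
    show "(\<lambda>n. y) \<longlonglongrightarrow> y" by simp
  qed
  have sums: "(\<lambda>i. bit_val (w i) / 2 ^ (i + 1)) sums y"
    unfolding sums_def ps using lim .
  have inf: "\<forall>N. \<exists>m\<ge>N. w m"
  proof (rule ccontr)
    assume "\<not> (\<forall>N. \<exists>m\<ge>N. w m)"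
    then obtain N where N: "\<forall>m\<ge>N. \<not> w m" by auto
    have const: "real_of_int (a (j + N)) / 2 ^ (j + N) = real_of_int (a N) / 2 ^ N" for j
    proof (induction j)
      case (Suc j)
      have "a (Suc (j + N)) = 2 * a (j + N)" using step[of "j+N"] N w_def by auto
      then show ?case using Suc by (simp add: field_simps)
    qed simp
    have "(\<lambda>j. real_of_int (a (j + N)) / 2 ^ (j + N)) \<longlonglongrightarrow> y"
      using LIMSEQ_ignore_initial_segment[OF lim, of N] .
    then have "real_of_int (a N) / 2 ^ N = y" unfolding const by (simp add: LIMSEQ_const_iff)
    with alt[of N] show False by (simp add: field_simps)
  qed
  show ?thesis using inf sums_unique[OF sums] unfolding inf_val_def by auto
qed

lemma has_true:
  assumes "length l = k" "l \<noteq> replicate k False"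
  shows "\<exists>j<k. l ! j"
proof (rule ccontr)
  assume "\<not> (\<exists>j<k. l ! j)"
  then have "l = replicate k False" using assms(1) by (intro nth_equalityI) auto
  with assms(2) show False by simp
qed

lemma img_prefix_len: "(\<forall>i. \<sigma> (b i) \<noteq> []) \<Longrightarrow> m \<le> length (img_prefix \<sigma> b m)"
proof (induction m)
  case (Suc m)
  then have "\<sigma> (b m) \<noteq> []" by blast
  then have "0 < length (\<sigma> (b m))" by simp
  moreover have "m \<le> length (img_prefix \<sigma> b m)" using Suc by blast
  ultimately show ?case by (cases "\<sigma> (b m)") (auto simp: img_prefix_Suc)
qed simp

theorem lemma3p1:
  fixes k :: nat and \<sigma> :: "bool list \<Rightarrow> bool list" and weps :: "bool list"
  assumes "k \<ge> 2"
    and "erasing_subst k \<sigma> weps"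
    and "weps \<noteq> replicate k True"
    and "optimality_cond k \<sigma>"
  shows "f_sigma k \<sigma> weps ` {0..1} = {0..1}"
proof
  show "f_sigma k \<sigma> weps ` {0..1} \<subseteq> {0..1}" using f_sigma_range by auto
next
  have kpos: "0 < k" using assms(1) by simp
  have lw: "length weps = k" and sw: "\<sigma> weps = []" using assms(2) by (auto simp: erasing_subst_def)
  show "{0..1} \<subseteq> f_sigma k \<sigma> weps ` {0..1}"
  proof
    fix y :: real assume "y \<in> {0..1}"
    then have y: "0 \<le> y" "y \<le> 1" by auto
    show "y \<in> f_sigma k \<sigma> weps ` {0..1}"
    proof (cases "y = 0")
      case True
      then show ?thesis by (force simp: f_sigma_def)
    next
      case False
      with y have ypos: "0 < y" by simp
      obtain w where winf: "\<forall>N. \<exists>m\<ge>N. w m" and wy: "inf_val w = y"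
        using bin_exists[OF ypos y(2)] by blast
      obtain b where blen: "\<forall>i. length (b i) = k \<and> \<sigma> (b i) \<noteq> []"
        and bpre: "\<forall>n. img_prefix \<sigma> b n = map w [0..<length (img_prefix \<sigma> b n)]"
        using assms(4) unfolding optimality_cond_def by blast
      define c where "c i = (if even i then b (i div 2) else weps)" for i
      have clen: "length (c i) = k" for i using blen lw by (simp add: c_def)
      define u where "u n = c (n div k) ! (n mod k)" for n
      have uc: "u (i * k + j) = c i ! j" if "j < k" for i j
        using that kpos by (simp add: u_def)
      have kb: "kblock k u i = c i" for i
      proof (rule nth_equalityI)
        show "length (kblock k u i) = length (c i)" by (simp add: kblock_def clen algebra_simps)
        fix j assume "j < length (kblock k u i)"
        then have j: "j < k" by (simp add: kblock_def algebra_simps)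
        then show "kblock k u i ! j = c i ! j"
          using uc[OF j, of i] by (simp add: kblock_def add.commute)
      qed
      have pair: "\<exists>i\<in>{2*m, 2*m+1}. \<exists>j<k. c i ! j" for m
      proof (cases "weps = replicate k False")
        case True
        have "b m \<noteq> weps" using blen sw by metis
        then obtain j where "j < k" "b m ! j" using has_true[of "b m" k] blen True by blast
        then show ?thesis by (auto simp: c_def)
      next
        case False
        then obtain j where "j < k" "weps ! j" using has_true[OF lw] by blast
        then show ?thesis by (auto simp: c_def)
      qed
      have uinf: "\<forall>N. \<exists>n\<ge>N. u n"
      proof
        fix N
        obtain i j where i: "i \<in> {2*N, 2*N+1}" and j: "j < k" "c i ! j" using pair[of N] by blast
        have "i \<le> i * k" using kpos by (cases k) auto
        moreover have "N \<le> i" using i by auto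
        ultimately have "N \<le> i * k + j" by linarith
        then show "\<exists>n\<ge>N. u n" using uc[OF j(1), of i] j(2) by blast
      qed
      define x where "x = inf_val u"
      obtain n0 where n0: "u n0" using uinf by blast
      have xpos: "0 < x" unfolding x_def inf_val_def
        by (rule suminf_pos2[OF summable_bits, of _ n0]) (use n0 in \<open>auto simp: bit_val_def\<close>)
      have x1: "x \<le> 1" unfolding x_def by (rule inf_val_le1)
      have bx: "bin_exp x = u" unfolding x_def by (rule bin_exp_eq[OF uinf])
      have notall: "\<not> (\<forall>i. kblock k (bin_exp x) i = weps)"
      proof
        assume "\<forall>i. kblock k (bin_exp x) i = weps"
        then have "c 0 = weps" using kb bx by metis
        then show False using blen sw by (simp add: c_def) metis
      qed
      have ip: "img_prefix \<sigma> c n = img_prefix \<sigma> b ((n + 1) div 2)" for n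
      proof (induction n)
        case 0 then show ?case by (simp add: img_prefix_def)
      next
        case (Suc n)
        show ?case
        proof (cases "even n")
          case True
          then have "(Suc n + 1) div 2 = Suc ((n + 1) div 2)" and "(n+1) div 2 = n div 2"
            by presburger+
          then show ?thesis using Suc True by (simp add: img_prefix_Suc c_def)
        next
          case False
          then have "(Suc n + 1) div 2 = (n + 1) div 2" by presburger
          then show ?thesis using Suc False by (simp add: img_prefix_Suc c_def sw)
        qed
      qed
      define L where "L m = length (img_prefix \<sigma> b m)" for m
      define P where "P n = (\<Sum>i<n. bit_val (w i) / 2 ^ (i + 1))" for n
      have Py: "P \<longlonglongrightarrow> y" using summable_LIMSEQ[OF summable_bits[of w]] wy
        unfolding P_def inf_val_def by simp
      have Lge: "m \<le> L m" for m unfolding L_def by (rule img_prefix_len) (use blen in blast)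
      have fv: "fin_val (img_prefix \<sigma> c n) = P (L ((n + 1) div 2))" for n
        unfolding ip P_def L_def by (subst bpre) (simp add: fin_val_def)
      have Lh: "filterlim (\<lambda>n. L ((n + 1) div 2)) at_top sequentially"
        unfolding filterlim_at_top eventually_sequentially
      proof
        fix Z
        show "\<exists>N. \<forall>n\<ge>N. Z \<le> L ((n + 1) div 2)"
        proof (rule exI[of _ "2 * Z"], intro allI impI)
          fix n assume "2 * Z \<le> n"
          then have "Z \<le> (n + 1) div 2" by linarith
          then show "Z \<le> L ((n + 1) div 2)" using Lge order_trans by blast
        qed
      qed
      have conv: "(\<lambda>n. fin_val (img_prefix \<sigma> c n)) \<longlonglongrightarrow> y"
        unfolding fv using filterlim_compose[OF Py Lh] by (simp add: o_def)
      have kbe: "kblock k (bin_exp x) = c" using kb bx by auto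
      have "f_sigma k \<sigma> weps x = y"
        using xpos x1 notall conv unfolding f_sigma_def subst_val_def kbe
        by (simp add: limI)
      moreover have "x \<in> {0..1}" using xpos x1 by simp
      ultimately show ?thesis by (metis image_eqI)
    qed
  qed
qed

end
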